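(* Let $A$ be a finite nonempty subset of an abelian group $\mathbf{G}$ and let $k\geq 1$ be an integer. Then $$|A|^{2k}\le \mathsf{E}_k(A)\cdot \sigma_k(A-A),\qquad |A|^{4k}\le \mathsf{E}_{2k}(A)\cdot \mathsf{T}_k(A+A),$$ and $$|A|^{2k+4}\le \mathsf{E}_{k+2}(A)\cdot \mathsf{E}_k(A-A),\qquad |A|^{2k+4}\le \mathsf{E}_{k+2}(A)\cdot \mathsf{E}_k(A+A).$$
   Context: For finite $X\subseteq\mathbf{G}$ write $(X\circ X)(x)=|\{(a,b)\in X^2: b-a=x\}|$. For an integer $j\ge 2$, $\mathsf{E}_j(X)=\sum_{x\in\mathbf G}(X\circ X)(x)^j$, and $\mathsf{E}_1(X)=|X|^2$. $\sigma_k(X)=|\{(x_1,\dots,x_k)\in X^k: x_1+\dots+x_k=0\}|$. $\mathsf{T}_k(X)=|\{(x_1,\dots,x_k,x_1',\dots,x_k')\in X^{2k}: x_1+\dots+x_k=x_1'+\dots+x_k'\}|$. $A\pm A=\{a\pm b: a,b\in A\}$. *)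

theory Defs
  imports "HOL-Analysis.Analysis" "HOL-Library.FuncSet"
begin

definition conv_count :: "'a::ab_group_add set \<Rightarrow> 'a \<Rightarrow> nat" where
  "conv_count X x = card {(a, b). a \<in> X \<and> b \<in> X \<and> b - a = x}"

definition Energy :: "nat \<Rightarrow> 'a::ab_group_add set \<Rightarrow> nat" where
  "Energy j X = (if j = 1 then card X ^ 2
     else (\<Sum>x\<in>{b - a | a b. a \<in> X \<and> b \<in> X}. conv_count X x ^ j))"

definition sumset :: "'a::ab_group_add set \<Rightarrow> 'a set \<Rightarrow> 'a set" where
  "sumset A B = {a + b | a b. a \<in> A \<and> b \<in> B}"

definition diffset :: "'a::ab_group_add set \<Rightarrow> 'a set \<Rightarrow> 'a set" where
  "diffset A B = {a - b | a b. a \<in> A \<and> b \<in> B}"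

definition sigma_k :: "nat \<Rightarrow> 'a::ab_group_add set \<Rightarrow> nat" where
  "sigma_k k X = card {x \<in> {..<k} \<rightarrow>\<^sub>E X. (\<Sum>i<k. x i) = 0}"

definition T_k :: "nat \<Rightarrow> 'a::ab_group_add set \<Rightarrow> nat" where
  "T_k k X = card {(x, y). x \<in> {..<k} \<rightarrow>\<^sub>E X \<and> y \<in> {..<k} \<rightarrow>\<^sub>E X
                     \<and> (\<Sum>i<k. x i) = (\<Sum>i<k. y i)}"

end

theory Submission
  imports Defs
begin


definition Q :: "nat set \<Rightarrow> nat \<Rightarrow> 'a::ab_group_add set \<Rightarrow> ((nat \<Rightarrow> 'a) \<times> (nat \<Rightarrow> 'a)) set" where
  "Q J n A = {(a,a'). a \<in> {..<n} \<rightarrow>\<^sub>E A \<and> a' \<in> {..<n} \<rightarrow>\<^sub>E A \<and>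
      (\<exists>t. \<forall>i<n. a' i - a i = (if i \<in> J then -t else t))}"

lemma Q_finite: "finite A \<Longrightarrow> finite (Q J n A)"
proof -
  assume "finite A"
  then have "finite (({..<n} \<rightarrow>\<^sub>E A) \<times> ({..<n} \<rightarrow>\<^sub>E A))" by (simp add: finite_PiE)
  moreover have "Q J n A \<subseteq> ({..<n} \<rightarrow>\<^sub>E A) \<times> ({..<n} \<rightarrow>\<^sub>E A)" by (auto simp: Q_def)
  ultimately show ?thesis by (rule finite_subset[rotated])
qed

lemma Q_swap:
  assumes "finite A" "J \<subseteq> {..<n}"
  shows "card (Q J n A) \<le> card (Q {} n A)"
proof -
  define sw where "sw = (\<lambda>(a::nat\<Rightarrow>'a,a'::nat\<Rightarrow>'a). ((\<lambda>i. if i \<in> J then a' i else a i), (\<lambda>i. if i \<in> J then a i else a' i)))"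
  have inj: "inj_on sw (Q J n A)"
  proof (rule inj_onI)
    fix p q assume "p \<in> Q J n A" "q \<in> Q J n A" "sw p = sw q"
    then show "p = q"
      by (cases p; cases q) (auto simp: sw_def fun_eq_iff split: if_splits; metis)
  qed
  have sub: "sw ` Q J n A \<subseteq> Q {} n A"
  proof
    fix z assume "z \<in> sw ` Q J n A"
    then obtain a a' t where z: "z = sw (a,a')" and a: "a \<in> {..<n} \<rightarrow>\<^sub>E A" and a': "a' \<in> {..<n} \<rightarrow>\<^sub>E A"
      and t: "\<forall>i<n. a' i - a i = (if i \<in> J then -t else t)" by (auto simp: Q_def)
    have "(\<lambda>i. if i \<in> J then a' i else a i) \<in> {..<n} \<rightarrow>\<^sub>E A"
      using a a' assms(2) by (auto simp: PiE_def Pi_def extensional_def)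
    moreover have "(\<lambda>i. if i \<in> J then a i else a' i) \<in> {..<n} \<rightarrow>\<^sub>E A"
      using a a' assms(2) by (auto simp: PiE_def Pi_def extensional_def)
    moreover have "\<forall>i<n. (if i \<in> J then a i else a' i) - (if i \<in> J then a' i else a i) = t"
    proof (intro allI impI)
      fix i assume "i < n" with t have "a' i - a i = (if i \<in> J then -t else t)" by auto
      then show "(if i \<in> J then a i else a' i) - (if i \<in> J then a' i else a i) = t"
        by (auto simp: algebra_simps)
    qed
    ultimately show "z \<in> Q {} n A" unfolding z sw_def Q_def by auto
  qed
  show ?thesis using card_inj_on_le[OF inj sub Q_finite[OF assms(1)]] .
qed

lemma Q_energy:
  assumes fA: "finite A" and n: "n \<ge> 1"
  shows "card (Q {} n A) = Energy n A"
proof (cases "n = 1")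
  case True
  have "Q {} n A = ({..<n} \<rightarrow>\<^sub>E A) \<times> ({..<n} \<rightarrow>\<^sub>E A)"
    using True by (auto simp: Q_def)
  then show ?thesis using True fA by (simp add: Energy_def card_cartesian_product card_PiE power2_eq_square)
next
  case False
  define D where "D = {b - a | a b. a \<in> A \<and> b \<in> A}"
  define P where "P t = {(a, b). a \<in> A \<and> b \<in> A \<and> b - a = t}" for t
  define Qt where "Qt t = {(a,a'). a \<in> {..<n} \<rightarrow>\<^sub>E A \<and> a' \<in> {..<n} \<rightarrow>\<^sub>E A \<and> (\<forall>i<n. a' i - a i = t)}" for t
  have fD: "finite D"
  proof -
    have "D = (\<lambda>(a,b). b - a) ` (A \<times> A)" by (auto simp: D_def)
    then show ?thesis using fA by simp
  qed
  have E: "Energy n A = (\<Sum>t\<in>D. card (P t) ^ n)"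
    using False by (simp add: Energy_def D_def P_def conv_count_def)
  have U: "Q {} n A = (\<Union>t\<in>D. Qt t)"
  proof
    show "Q {} n A \<subseteq> (\<Union>t\<in>D. Qt t)"
    proof
      fix z assume "z \<in> Q {} n A"
      then obtain a a' t where z: "z = (a,a')" and a: "a \<in> {..<n} \<rightarrow>\<^sub>E A" and a': "a' \<in> {..<n} \<rightarrow>\<^sub>E A"
        and t: "\<forall>i<n. a' i - a i = t" by (auto simp: Q_def)
      have "t \<in> D" using t a a' n unfolding D_def by (force simp: PiE_def Pi_def)
      then show "z \<in> (\<Union>t\<in>D. Qt t)" using z a a' t by (auto simp: Qt_def)
    qed
  next
    show "(\<Union>t\<in>D. Qt t) \<subseteq> Q {} n A" by (auto simp: Qt_def Q_def)
  qed
  have disj: "\<forall>s\<in>D. \<forall>t\<in>D. s \<noteq> t \<longrightarrow> Qt s \<inter> Qt t = {}"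
    using n by (auto simp: Qt_def)
  have fQt: "finite (Qt t)" for t
  proof -
    have "Qt t \<subseteq> Q {} n A" by (auto simp: Qt_def Q_def)
    then show ?thesis using Q_finite[OF fA] by (rule finite_subset)
  qed
  have cQt: "card (Qt t) = card (P t) ^ n" for t
  proof -
    have "bij_betw (\<lambda>w. (restrict (fst \<circ> w) {..<n}, restrict (snd \<circ> w) {..<n})) ({..<n} \<rightarrow>\<^sub>E P t) (Qt t)"
    proof (rule bij_betw_byWitness[where f' = "\<lambda>(a,a'). restrict (\<lambda>i. (a i, a' i)) {..<n}"])
      show "\<forall>w\<in>{..<n} \<rightarrow>\<^sub>E P t. (case (restrict (fst \<circ> w) {..<n}, restrict (snd \<circ> w) {..<n}) of (a, a') \<Rightarrow> restrict (\<lambda>i. (a i, a' i)) {..<n}) = w"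
        by (auto simp: fun_eq_iff PiE_def extensional_def)
      show "\<forall>z\<in>Qt t. (\<lambda>w. (restrict (fst \<circ> w) {..<n}, restrict (snd \<circ> w) {..<n})) (case z of (a, a') \<Rightarrow> restrict (\<lambda>i. (a i, a' i)) {..<n}) = z"
        by (auto simp: fun_eq_iff PiE_def extensional_def Qt_def)
      show "(\<lambda>w. (restrict (fst \<circ> w) {..<n}, restrict (snd \<circ> w) {..<n})) ` ({..<n} \<rightarrow>\<^sub>E P t) \<subseteq> Qt t"
        by (auto simp: Qt_def P_def PiE_def Pi_def split: prod.splits; metis prod.collapse)
      show "(\<lambda>(a, a'). restrict (\<lambda>i. (a i, a' i)) {..<n}) ` Qt t \<subseteq> {..<n} \<rightarrow>\<^sub>E P t"
        by (auto simp: Qt_def P_def PiE_def Pi_def)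
    qed
    then have "card (Qt t) = card ({..<n} \<rightarrow>\<^sub>E P t)" by (simp add: bij_betw_same_card)
    also have "\<dots> = card (P t) ^ n" by (simp add: card_PiE)
    finally show ?thesis .
  qed
  show ?thesis unfolding E U
    by (subst card_UN_disjoint[OF fD]) (use fQt disj cQt in auto)
qed


lemma swap_eq: fixes x::"'a::ab_group_add" shows "x - y = x' - y' \<Longrightarrow> y' - y = x' - x"
  by (simp add: algebra_simps eq_diff_eq diff_eq_eq)

lemma rot_sum: fixes f :: "nat \<Rightarrow> 'a::comm_monoid_add"
  assumes "k \<ge> 1" shows "(\<Sum>i<k. f (Suc i mod k)) = (\<Sum>i<k. f i)"
proof -
  obtain m where k: "k = Suc m" using assms by (cases k) auto
  have "(\<Sum>i<Suc m. f (Suc i mod Suc m)) = (\<Sum>i<m. f (Suc i mod Suc m)) + f (Suc m mod Suc m)"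
    by simp
  also have "(\<Sum>i<m. f (Suc i mod Suc m)) = (\<Sum>i<m. f (Suc i))"
    by (rule sum.cong) auto
  also have "(\<Sum>i<m. f (Suc i)) + f (Suc m mod Suc m) = (\<Sum>i<Suc m. f i)"
    by (subst sum.lessThan_Suc_shift) (simp add: add.commute)
  finally show ?thesis using k by simp
qed

lemma rot_const:
  assumes "\<forall>i<k. g (Suc i mod k) = g i" shows "\<forall>i<k. g i = g 0"
proof (intro allI impI)
  fix i assume "i < k" then show "g i = g 0"
  proof (induction i)
    case (Suc i)
    have ik: "i < k" using Suc.prems by simp
    have "g (Suc i mod k) = g i" using ik by (rule mp[OF spec[OF assms, of i]])
    moreover have "Suc i mod k = Suc i" using Suc.prems by simp
    moreover have "g i = g 0" using Suc.IH ik by simp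
    ultimately show ?case by simp
  qed simp
qed

lemma card_pow: "finite A \<Longrightarrow> card ({..<n} \<rightarrow>\<^sub>E A) = card A ^ n"
  by (simp add: card_PiE)

lemma fin_diff: "finite A \<Longrightarrow> finite (diffset A A)"
proof -
  assume "finite A"
  moreover have "diffset A A = (\<lambda>(a,b). a - b) ` (A \<times> A)" by (auto simp: diffset_def)
  ultimately show ?thesis by simp
qed

lemma fin_sum: "finite A \<Longrightarrow> finite (sumset A A)"
proof -
  assume "finite A"
  moreover have "sumset A A = (\<lambda>(a,b). a + b) ` (A \<times> A)" by (auto simp: sumset_def)
  ultimately show ?thesis by simp
qed

lemma sum_sq_nat: fixes f :: "'b \<Rightarrow> nat"
  shows "(\<Sum>i\<in>I. f i)^2 \<le> card I * (\<Sum>y\<in>I. (f y)^2)"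
proof -
  have "real ((\<Sum>i\<in>I. f i)^2) = (\<Sum>i\<in>I. real (f i))^2" by simp
  also have "\<dots> \<le> (\<Sum>y\<in>I. (real (f y))^2) * card I" by (rule sum_squared_le_sum_of_squares)
  also have "\<dots> = real (card I * (\<Sum>y\<in>I. (f y)^2))" by simp
  finally show ?thesis by linarith
qed

lemma cs_count:
  assumes fX: "finite X" and fY: "finite Y" and im: "\<phi> ` X \<subseteq> Y"
  shows "card X ^ 2 \<le> card Y * card {(x,x'). x \<in> X \<and> x' \<in> X \<and> \<phi> x = \<phi> x'}"
proof -
  define fib where "fib y = {x\<in>X. \<phi> x = y}" for y
  have X: "X = (\<Union>y\<in>Y. fib y)" using im by (auto simp: fib_def)
  have cX: "card X = (\<Sum>y\<in>Y. card (fib y))"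
    by (subst X, rule card_UN_disjoint) (auto simp: fY fX fib_def)
  have P: "{(x,x'). x \<in> X \<and> x' \<in> X \<and> \<phi> x = \<phi> x'} = (\<Union>y\<in>Y. fib y \<times> fib y)"
    using im by (auto simp: fib_def)
  have cP: "card {(x,x'). x \<in> X \<and> x' \<in> X \<and> \<phi> x = \<phi> x'} = (\<Sum>y\<in>Y. card (fib y)^2)"
    by (subst P, subst card_UN_disjoint) (auto simp: fY fX fib_def card_cartesian_product power2_eq_square)
  show ?thesis unfolding cX cP by (rule sum_sq_nat)
qed

lemma part3:
  fixes A :: "'a::ab_group_add set"
  assumes fA: "finite A" and k: "k \<ge> 1"
  shows "card A ^ (2*k+4) \<le> Energy (k+2) A * Energy k (diffset A A)"
proof -
  define X where "X = {..<k+2} \<rightarrow>\<^sub>E A"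
  define \<phi> where "\<phi> a = (restrict (\<lambda>i. a i - a k) {..<k}, restrict (\<lambda>i. a i - a (k+1)) {..<k})" for a :: "nat \<Rightarrow> 'a"
  have im: "\<phi> ` X \<subseteq> Q {} k (diffset A A)"
  proof
    fix z assume "z \<in> \<phi> ` X"
    then obtain a where z: "z = \<phi> a" and a: "a \<in> X" by auto
    have ai: "a i \<in> A" if "i < k+2" for i using a that by (auto simp: X_def PiE_def Pi_def)
    have m: "a i - a j \<in> diffset A A" if "i < k+2" "j < k+2" for i j
      using ai[OF that(1)] ai[OF that(2)] unfolding diffset_def by blast
    have d: "\<forall>i<k. (a i - a (k+1)) - (a i - a k) = a k - a (k+1)" by (simp add: algebra_simps)
    have r1: "restrict (\<lambda>i. a i - a k) {..<k} \<in> {..<k} \<rightarrow>\<^sub>E diffset A A"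
      using m by (simp add: restrict_PiE_iff)
    have r2: "restrict (\<lambda>i. a i - a (k+1)) {..<k} \<in> {..<k} \<rightarrow>\<^sub>E diffset A A"
      using m by (simp add: restrict_PiE_iff)
    have "\<exists>t. \<forall>i<k. restrict (\<lambda>i. a i - a (k+1)) {..<k} i - restrict (\<lambda>i. a i - a k) {..<k} i = t"
      using d by (intro exI[of _ "a k - a (k+1)"]) simp
    then show "z \<in> Q {} k (diffset A A)"
      unfolding z \<phi>_def Q_def using r1 r2 by simp
  qed
  have pairs: "{(x,x'). x \<in> X \<and> x' \<in> X \<and> \<phi> x = \<phi> x'} \<subseteq> Q {} (k+2) A"
  proof safe
    fix a a' assume a: "a \<in> X" and a': "a' \<in> X" and e: "\<phi> a = \<phi> a'"
    have e1: "a i - a k = a' i - a' k" if "i < k" for i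
    proof - have "fst (\<phi> a) i = fst (\<phi> a') i" using e by simp
      then show ?thesis using that by (simp add: \<phi>_def) qed
    have e2: "a i - a (k+1) = a' i - a' (k+1)" if "i < k" for i
    proof - have "snd (\<phi> a) i = snd (\<phi> a') i" using e by simp
      then show ?thesis using that by (simp add: \<phi>_def) qed
    have "\<forall>i<k+2. a' i - a i = (if i \<in> {} then - (a' k - a k) else a' k - a k)"
    proof (intro allI impI)
      fix i assume i: "i < k+2"
      have "a' i - a i = a' k - a k"
      proof (cases "i < k")
        case True show ?thesis by (rule swap_eq[OF e1[OF True], symmetric])
      next
        case False
        then have "i = k \<or> i = k+1" using i by auto
        moreover have "a' (k+1) - a (k+1) = a' k - a k"
        proof -
          have k0: "0 < k" using k by simp
          show ?thesis by (rule trans[OF swap_eq[OF e2[OF k0]] sym[OF swap_eq[OF e1[OF k0]]]])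
        qed
        ultimately show ?thesis by auto
      qed
      then show "a' i - a i = (if i \<in> {} then - (a' k - a k) else a' k - a k)"
        by (simp only: empty_iff if_False)
    qed
    then have "\<exists>t. \<forall>i<k+2. a' i - a i = (if i \<in> {} then -t else t)"
      by (rule exI)
    then show "(a, a') \<in> Q {} (k+2) A" using a a' by (simp add: X_def Q_def)
  qed
  have fX: "finite X" using fA by (simp add: X_def finite_PiE)
  have "card X ^ 2 \<le> card (Q {} k (diffset A A)) * card {(x,x'). x \<in> X \<and> x' \<in> X \<and> \<phi> x = \<phi> x'}"
    by (rule cs_count[OF fX Q_finite[OF fin_diff[OF fA]] im])
  also have "\<dots> \<le> card (Q {} k (diffset A A)) * card (Q {} (k+2) A)"
    by (rule mult_le_mono2, rule card_mono[OF Q_finite[OF fA] pairs])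
  finally have "card X ^ 2 \<le> Energy k (diffset A A) * Energy (k+2) A"
    using Q_energy[OF fin_diff[OF fA] k] Q_energy[OF fA, of "k+2"] by simp
  moreover have "card X = card A ^ (k+2)" using card_pow[OF fA] by (simp add: X_def)
  moreover have "card A ^ (2*k+4) = (card A ^ (k+2))^2"
  proof - have "2*k+4 = (k+2)*2" by simp then show ?thesis by (simp only: power_mult) qed
  ultimately show ?thesis by (simp add: mult.commute)
qed


lemma swap_add: fixes x::"'a::ab_group_add" shows "x + y = x' + y' \<Longrightarrow> x' - x = y - y'"
  by (simp add: algebra_simps eq_diff_eq diff_eq_eq)

lemma part4:
  fixes A :: "'a::ab_group_add set"
  assumes fA: "finite A" and k: "k \<ge> 1"
  shows "card A ^ (2*k+4) \<le> Energy (k+2) A * Energy k (sumset A A)"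
proof -
  define X where "X = {..<k+2} \<rightarrow>\<^sub>E A"
  define \<phi> where "\<phi> a = (restrict (\<lambda>i. a i + a k) {..<k}, restrict (\<lambda>i. a i + a (k+1)) {..<k})" for a :: "nat \<Rightarrow> 'a"
  have im: "\<phi> ` X \<subseteq> Q {} k (sumset A A)"
  proof
    fix z assume "z \<in> \<phi> ` X"
    then obtain a where z: "z = \<phi> a" and a: "a \<in> X" by auto
    have ai: "a i \<in> A" if "i < k+2" for i using a that by (auto simp: X_def PiE_def Pi_def)
    have m: "a i + a j \<in> sumset A A" if "i < k+2" "j < k+2" for i j
      using ai[OF that(1)] ai[OF that(2)] unfolding sumset_def by blast
    have d: "\<forall>i<k. (a i + a (k+1)) - (a i + a k) = a (k+1) - a k" by (simp add: algebra_simps)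
    have r1: "restrict (\<lambda>i. a i + a k) {..<k} \<in> {..<k} \<rightarrow>\<^sub>E sumset A A"
      using m by (simp add: restrict_PiE_iff)
    have r2: "restrict (\<lambda>i. a i + a (k+1)) {..<k} \<in> {..<k} \<rightarrow>\<^sub>E sumset A A"
      using m by (simp add: restrict_PiE_iff)
    have "\<exists>t. \<forall>i<k. restrict (\<lambda>i. a i + a (k+1)) {..<k} i - restrict (\<lambda>i. a i + a k) {..<k} i = t"
      using d by (intro exI[of _ "a (k+1) - a k"]) simp
    then show "z \<in> Q {} k (sumset A A)"
      unfolding z \<phi>_def Q_def using r1 r2 by simp
  qed
  have pairs: "{(x,x'). x \<in> X \<and> x' \<in> X \<and> \<phi> x = \<phi> x'} \<subseteq> Q {k, k+1} (k+2) A"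
  proof safe
    fix a a' assume a: "a \<in> X" and a': "a' \<in> X" and e: "\<phi> a = \<phi> a'"
    have e1: "a i + a k = a' i + a' k" if "i < k" for i
    proof - have "fst (\<phi> a) i = fst (\<phi> a') i" using e by simp
      then show ?thesis using that by (simp add: \<phi>_def) qed
    have e2: "a i + a (k+1) = a' i + a' (k+1)" if "i < k" for i
    proof - have "snd (\<phi> a) i = snd (\<phi> a') i" using e by simp
      then show ?thesis using that by (simp add: \<phi>_def) qed
    have k0: "0 < k" using k by simp
    obtain t where t: "t = a k - a' k" by blast
    have "\<forall>i<k+2. a' i - a i = (if i \<in> {k, k+1} then - t else t)"
    proof (intro allI impI)
      fix i assume i: "i < k+2"
      show "a' i - a i = (if i \<in> {k, k+1} then - t else t)"
      proof (cases "i < k")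
        case True
        have "a' i - a i = t" using swap_add[OF e1[OF True]] t by simp
        moreover have "i \<notin> {k, k+1}" using True by simp
        ultimately show ?thesis by simp
      next
        case False
        then have "i = k \<or> i = k+1" using i by auto
        moreover have "a' k - a k = - t" using t by simp
        moreover have "a' (k+1) - a (k+1) = - t"
        proof -
          have "a (k+1) - a' (k+1) = t"
            using swap_add[OF e2[OF k0]] swap_add[OF e1[OF k0]] t by simp
          then have "- (a (k+1) - a' (k+1)) = - t" by simp
          then show ?thesis by simp
        qed
        ultimately show ?thesis by auto
      qed
    qed
    then have "\<exists>t. \<forall>i<k+2. a' i - a i = (if i \<in> {k, k+1} then -t else t)"
      by (rule exI)
    then show "(a, a') \<in> Q {k, k+1} (k+2) A" using a a' by (simp add: X_def Q_def)
  qed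
  have fX: "finite X" using fA by (simp add: X_def finite_PiE)
  have "card X ^ 2 \<le> card (Q {} k (sumset A A)) * card {(x,x'). x \<in> X \<and> x' \<in> X \<and> \<phi> x = \<phi> x'}"
    by (rule cs_count[OF fX Q_finite[OF fin_sum[OF fA]] im])
  also have "\<dots> \<le> card (Q {} k (sumset A A)) * card (Q {k, k+1} (k+2) A)"
    by (rule mult_le_mono2, rule card_mono[OF Q_finite[OF fA] pairs])
  also have "\<dots> \<le> card (Q {} k (sumset A A)) * card (Q {} (k+2) A)"
    by (rule mult_le_mono2, rule Q_swap[OF fA]) auto
  finally have "card X ^ 2 \<le> Energy k (sumset A A) * Energy (k+2) A"
    using Q_energy[OF fin_sum[OF fA] k] Q_energy[OF fA, of "k+2"] by simp
  moreover have "card X = card A ^ (k+2)" using card_pow[OF fA] by (simp add: X_def)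
  moreover have "card A ^ (2*k+4) = (card A ^ (k+2))^2"
  proof - have "2*k+4 = (k+2)*2" by simp then show ?thesis by (simp only: power_mult) qed
  ultimately show ?thesis by (simp add: mult.commute)
qed



lemma part1:
  fixes A :: "'a::ab_group_add set"
  assumes fA: "finite A" and k: "k \<ge> 1"
  shows "card A ^ (2*k) \<le> Energy k A * sigma_k k (diffset A A)"
proof -
  define X where "X = {..<k} \<rightarrow>\<^sub>E A"
  define Y where "Y = {x \<in> {..<k} \<rightarrow>\<^sub>E diffset A A. (\<Sum>i<k. x i) = 0}"
  define \<phi> where "\<phi> a = restrict (\<lambda>i. a i - a (Suc i mod k)) {..<k}" for a :: "nat \<Rightarrow> 'a"
  have modk: "Suc i mod k < k" for i using k by simp
  have fY: "finite Y"
  proof -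
    have "Y \<subseteq> {..<k} \<rightarrow>\<^sub>E diffset A A" by (auto simp: Y_def)
    then show ?thesis using fin_diff[OF fA] by (meson finite_PiE finite_lessThan finite_subset)
  qed
  have im: "\<phi> ` X \<subseteq> Y"
  proof
    fix z assume "z \<in> \<phi> ` X"
    then obtain a where z: "z = \<phi> a" and a: "a \<in> X" by auto
    have ai: "a i \<in> A" if "i < k" for i using a that by (auto simp: X_def PiE_def Pi_def)
    have m: "a i - a (Suc i mod k) \<in> diffset A A" if "i < k" for i
      using ai[OF that] ai[OF modk] unfolding diffset_def by blast
    have r1: "\<phi> a \<in> {..<k} \<rightarrow>\<^sub>E diffset A A"
      using m by (simp add: restrict_PiE_iff \<phi>_def)
    have "(\<Sum>i<k. \<phi> a i) = (\<Sum>i<k. a i - a (Suc i mod k))"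
      by (rule sum.cong) (auto simp: \<phi>_def)
    also have "\<dots> = (\<Sum>i<k. a i) - (\<Sum>i<k. a (Suc i mod k))" by (rule sum_subtractf)
    also have "\<dots> = 0" using rot_sum[OF k, of a] by simp
    finally show "z \<in> Y" using r1 z by (simp add: Y_def)
  qed
  have pairs: "{(x,x'). x \<in> X \<and> x' \<in> X \<and> \<phi> x = \<phi> x'} \<subseteq> Q {} k A"
  proof safe
    fix a a' assume a: "a \<in> X" and a': "a' \<in> X" and e: "\<phi> a = \<phi> a'"
    have e1: "a i - a (Suc i mod k) = a' i - a' (Suc i mod k)" if "i < k" for i
    proof - have "\<phi> a i = \<phi> a' i" using e by simp
      then show ?thesis using that by (simp add: \<phi>_def) qed
    define g where "g i = a' i - a i" for i
    have "\<forall>i<k. g (Suc i mod k) = g i"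
      unfolding g_def using swap_eq[OF e1] by blast
    then have gc: "\<forall>i<k. g i = g 0" by (rule rot_const)
    have "\<forall>i<k. a' i - a i = (if i \<in> {} then - g 0 else g 0)"
    proof (intro allI impI)
      fix i assume i: "i < k"
      have "a' i - a i = g 0" using gc i unfolding g_def by blast
      then show "a' i - a i = (if i \<in> {} then - g 0 else g 0)" by (simp only: empty_iff if_False)
    qed
    then have "\<exists>t. \<forall>i<k. a' i - a i = (if i \<in> {} then -t else t)"
      by (rule exI)
    then show "(a, a') \<in> Q {} k A" using a a' by (simp add: X_def Q_def)
  qed
  have fX: "finite X" using fA by (simp add: X_def finite_PiE)
  have "card X ^ 2 \<le> card Y * card {(x,x'). x \<in> X \<and> x' \<in> X \<and> \<phi> x = \<phi> x'}"
    by (rule cs_count[OF fX fY im])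
  also have "\<dots> \<le> card Y * card (Q {} k A)"
    by (rule mult_le_mono2, rule card_mono[OF Q_finite[OF fA] pairs])
  finally have "card X ^ 2 \<le> sigma_k k (diffset A A) * Energy k A"
    using Q_energy[OF fA k] by (simp add: Y_def sigma_k_def)
  moreover have "card X = card A ^ k" using card_pow[OF fA] by (simp add: X_def)
  moreover have "card A ^ (2*k) = (card A ^ k)^2"
  proof - have "2*k = k*2" by simp then show ?thesis by (simp only: power_mult) qed
  ultimately show ?thesis by (simp add: mult.commute)
qed

lemma part2:
  fixes A :: "'a::ab_group_add set"
  assumes fA: "finite A" and k: "k \<ge> 1"
  shows "card A ^ (4*k) \<le> Energy (2*k) A * T_k k (sumset A A)"
proof -
  define S where "S = sumset A A"
  define X where "X = {..<2*k} \<rightarrow>\<^sub>E A"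
  define Y where "Y = {(x, y). x \<in> {..<k} \<rightarrow>\<^sub>E S \<and> y \<in> {..<k} \<rightarrow>\<^sub>E S
                     \<and> (\<Sum>i<k. x i) = (\<Sum>i<k. y i)}"
  define \<phi> where "\<phi> a = (restrict (\<lambda>i. a i + a (k+i)) {..<k}, restrict (\<lambda>i. a (Suc i mod k) + a (k+i)) {..<k})" for a :: "nat \<Rightarrow> 'a"
  have modk: "Suc i mod k < k" for i using k by simp
  have fY: "finite Y"
  proof -
    have "Y \<subseteq> ({..<k} \<rightarrow>\<^sub>E S) \<times> ({..<k} \<rightarrow>\<^sub>E S)" by (auto simp: Y_def)
    moreover have "finite (({..<k} \<rightarrow>\<^sub>E S) \<times> ({..<k} \<rightarrow>\<^sub>E S))"
      using fin_sum[OF fA] by (simp add: S_def finite_PiE)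
    ultimately show ?thesis by (rule finite_subset)
  qed
  have im: "\<phi> ` X \<subseteq> Y"
  proof
    fix z assume "z \<in> \<phi> ` X"
    then obtain a where z: "z = \<phi> a" and a: "a \<in> X" by auto
    have ai: "a i \<in> A" if "i < 2*k" for i using a that by (auto simp: X_def PiE_def Pi_def)
    have m1: "a i + a (k+i) \<in> S" if "i < k" for i
      using ai[of i] ai[of "k+i"] that unfolding S_def sumset_def by auto
    have m2: "a (Suc i mod k) + a (k+i) \<in> S" if "i < k" for i
      using ai[of "Suc i mod k"] ai[of "k+i"] that modk[of i] unfolding S_def sumset_def by auto
    have r1: "fst (\<phi> a) \<in> {..<k} \<rightarrow>\<^sub>E S"
      using m1 by (simp add: restrict_PiE_iff \<phi>_def)
    have r2: "snd (\<phi> a) \<in> {..<k} \<rightarrow>\<^sub>E S"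
      using m2 by (simp add: restrict_PiE_iff \<phi>_def)
    have "(\<Sum>i<k. fst (\<phi> a) i) = (\<Sum>i<k. a i + a (k+i))"
      by (rule sum.cong) (auto simp: \<phi>_def)
    also have "\<dots> = (\<Sum>i<k. a i) + (\<Sum>i<k. a (k+i))" by (rule sum.distrib)
    also have "\<dots> = (\<Sum>i<k. a (Suc i mod k)) + (\<Sum>i<k. a (k+i))" using rot_sum[OF k, of a] by simp
    also have "\<dots> = (\<Sum>i<k. a (Suc i mod k) + a (k+i))" by (rule sum.distrib[symmetric])
    also have "\<dots> = (\<Sum>i<k. snd (\<phi> a) i)"
      by (rule sum.cong) (auto simp: \<phi>_def)
    finally show "z \<in> Y" using r1 r2 z by (simp add: Y_def case_prod_beta)
  qed
  have pairs: "{(x,x'). x \<in> X \<and> x' \<in> X \<and> \<phi> x = \<phi> x'} \<subseteq> Q {k..<2*k} (2*k) A"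
  proof safe
    fix a a' assume a: "a \<in> X" and a': "a' \<in> X" and e: "\<phi> a = \<phi> a'"
    have e1: "a i + a (k+i) = a' i + a' (k+i)" if "i < k" for i
    proof - have "fst (\<phi> a) i = fst (\<phi> a') i" using e by simp
      then show ?thesis using that by (simp add: \<phi>_def) qed
    have e2: "a (Suc i mod k) + a (k+i) = a' (Suc i mod k) + a' (k+i)" if "i < k" for i
    proof - have "snd (\<phi> a) i = snd (\<phi> a') i" using e by simp
      then show ?thesis using that by (simp add: \<phi>_def) qed
    define g where "g i = a' i - a i" for i
    have h1: "g i = a (k+i) - a' (k+i)" if "i < k" for i
      unfolding g_def by (rule swap_add[OF e1[OF that]])
    have h2: "g (Suc i mod k) = a (k+i) - a' (k+i)" if "i < k" for i
      unfolding g_def by (rule swap_add[OF e2[OF that]])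
    have "\<forall>i<k. g (Suc i mod k) = g i"
    proof (intro allI impI)
      fix i assume i: "i < k"
      show "g (Suc i mod k) = g i" by (rule trans[OF h2[OF i] sym[OF h1[OF i]]])
    qed
    then have gc: "\<forall>i<k. g i = g 0" by (rule rot_const)
    have "\<forall>j<2*k. a' j - a j = (if j \<in> {k..<2*k} then - g 0 else g 0)"
    proof (intro allI impI)
      fix j assume j: "j < 2*k"
      show "a' j - a j = (if j \<in> {k..<2*k} then - g 0 else g 0)"
      proof (cases "j < k")
        case True
        have "a' j - a j = g 0" using gc True unfolding g_def by blast
        then show ?thesis using True by simp
      next
        case False
        define i where "i = j - k"
        have i: "i < k" "j = k + i" using False j by (auto simp: i_def)
        have "a (k+i) - a' (k+i) = g 0"
          by (rule trans[OF sym[OF h1[OF i(1)]] mp[OF spec[OF gc, of i] i(1)]])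
        then have "- (a (k+i) - a' (k+i)) = - g 0" by simp
        then have "a' j - a j = - g 0" using i(2) by simp
        then show ?thesis using False j by simp
      qed
    qed
    then have "\<exists>t. \<forall>j<2*k. a' j - a j = (if j \<in> {k..<2*k} then -t else t)"
      by (rule exI)
    then show "(a, a') \<in> Q {k..<2*k} (2*k) A" using a a' by (simp add: X_def Q_def)
  qed
  have fX: "finite X" using fA by (simp add: X_def finite_PiE)
  have k2: "2*k \<ge> 1" using k by simp
  have "card X ^ 2 \<le> card Y * card {(x,x'). x \<in> X \<and> x' \<in> X \<and> \<phi> x = \<phi> x'}"
    by (rule cs_count[OF fX fY im])
  also have "\<dots> \<le> card Y * card (Q {k..<2*k} (2*k) A)"
    by (rule mult_le_mono2, rule card_mono[OF Q_finite[OF fA] pairs])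
  also have "\<dots> \<le> card Y * card (Q {} (2*k) A)"
    by (rule mult_le_mono2, rule Q_swap[OF fA]) auto
  finally have "card X ^ 2 \<le> T_k k (sumset A A) * Energy (2*k) A"
    using Q_energy[OF fA k2] by (simp add: Y_def T_k_def S_def)
  moreover have "card X = card A ^ (2*k)" using card_pow[OF fA] by (simp add: X_def)
  moreover have "card A ^ (4*k) = (card A ^ (2*k))^2"
  proof - have "4*k = (2*k)*2" by simp then show ?thesis by (simp only: power_mult) qed
  ultimately show ?thesis by (simp add: mult.commute)
qed

theorem lemma3:
  fixes A :: "'a::ab_group_add set" and k :: nat
  assumes "finite A" and "A \<noteq> {}" and "k \<ge> 1"
  shows "card A ^ (2*k) \<le> Energy k A * sigma_k k (diffset A A)
    \<and> card A ^ (4*k) \<le> Energy (2*k) A * T_k k (sumset A A)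
    \<and> card A ^ (2*k+4) \<le> Energy (k+2) A * Energy k (diffset A A)
    \<and> card A ^ (2*k+4) \<le> Energy (k+2) A * Energy k (sumset A A)"
  using part1[OF assms(1,3)] part2[OF assms(1,3)] part3[OF assms(1,3)] part4[OF assms(1,3)]
  by blast

end
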